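(* Let $L \geq 2$, $m = L+1$, $\gamma = (L+1)^3$, and for $i \in \{0,\ldots,L\}$, $k\in[m]$ let $\pi_i(A_k) = w_i(k)/\sum_{h=1}^m w_i(h)$ with $w_i(k) = \gamma^{2(i+1)k - k^2+1} + \sum_{r=0}^L\gamma^{(2r+1)(i+1)-r^2-r}$. Let $\overline{\pi}(\xi) = \prod_{i=0}^L \pi_i(A_{\xi_i})$ for $\xi\in[m]^{L+1}$, let $\lambda = (1, 2, \ldots, m)$ (i.e. $\lambda_i = i+1$), let $\mathcal{X}_\lambda$ be the set of states reachable from $\lambda$ by finitely many swaps of adjacent levels, and $\overline{\pi}_\lambda = \overline{\pi}/\overline{\pi}(\mathcal{X}_\lambda)$ on $\mathcal{X}_\lambda$. Let $S \subseteq \mathcal{X}_\lambda$ be the set of states $\xi$ for which there is a sequence $\lambda = \tau^0, \ldots, \tau^N = \xi$, each obtained from the previous by swapping the entries of two adjacent levels, such that every $\tau^s$ differs from $\lambda$ in at most $\lfloor\log_2 L\rfloor - 1$ coordinates. Then $\overline{\pi}_\lambda(S) > \frac{1}{2e}$.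
   Context: A swap of adjacent levels maps $\xi$ to $(j-1,j)\xi$, the vector with entries at positions $j-1$ and $j$ exchanged, $j\in\{1,\ldots,L\}$. Two states differ in coordinate $\ell$ if their $\ell$-th entries are unequal. *)

theory Defs
  imports Complex_Main
begin

definition gam :: "nat \<Rightarrow> real" where
  "gam L = (real L + 1) ^ 3"

definition wt :: "nat \<Rightarrow> nat \<Rightarrow> nat \<Rightarrow> real" where
  "wt L i k = gam L powi (2 * (int i + 1) * int k - (int k)\<^sup>2 + 1)
     + (\<Sum>r=0..L. gam L powi ((2 * int r + 1) * (int i + 1) - (int r)\<^sup>2 - int r))"

definition pi_lvl :: "nat \<Rightarrow> nat \<Rightarrow> nat \<Rightarrow> real" where
  "pi_lvl L i k = wt L i k / (\<Sum>h=1..L+1. wt L i h)"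

definition pibar :: "nat \<Rightarrow> nat list \<Rightarrow> real" where
  "pibar L xi = (\<Prod>i=0..L. pi_lvl L i (xi ! i))"

definition lam :: "nat \<Rightarrow> nat list" where
  "lam L = map Suc [0..<L+1]"

definition swap_adj :: "nat list \<Rightarrow> nat \<Rightarrow> nat list" where
  "swap_adj xi j = xi[j - 1 := xi ! j, j := xi ! (j - 1)]"

definition adj_step :: "nat \<Rightarrow> nat list \<Rightarrow> nat list \<Rightarrow> bool" where
  "adj_step L xi eta \<longleftrightarrow> (\<exists>j\<in>{1..L}. eta = swap_adj xi j)"

definition Xlam :: "nat \<Rightarrow> nat list set" where
  "Xlam L = {xi. (adj_step L)\<^sup>*\<^sup>* (lam L) xi}"

definition ndiff :: "nat \<Rightarrow> nat list \<Rightarrow> nat list \<Rightarrow> nat" where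
  "ndiff L xi eta = card {l. l \<le> L \<and> xi ! l \<noteq> eta ! l}"

definition Sset :: "nat \<Rightarrow> nat list set" where
  "Sset L = {xi. \<exists>taus. taus \<noteq> [] \<and> hd taus = lam L \<and> last taus = xi
      \<and> (\<forall>s. Suc s < length taus \<longrightarrow> adj_step L (taus ! s) (taus ! Suc s))
      \<and> (\<forall>tau\<in>set taus. int (ndiff L tau (lam L)) \<le> \<lfloor>log 2 (real L)\<rfloor> - 1)}"

definition pibar_lam :: "nat \<Rightarrow> nat list set \<Rightarrow> real" where
  "pibar_lam L A = (\<Sum>xi\<in>A. pibar L xi) / (\<Sum>xi\<in>Xlam L. pibar L xi)"

end

theory Submission
  imports Defs
begin

lemma gam_ge1: "gam L \<ge> 1"
  unfolding gam_def by simp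

lemma exp1_le:
  fixes k :: nat and n :: int
  assumes "int k \<noteq> n"
  shows "2 * n * int k - (int k)\<^sup>2 + 1 \<le> n\<^sup>2"
proof -
  have "int k - n \<noteq> 0" using assms by simp
  hence "\<bar>int k - n\<bar> \<ge> 1" by linarith
  hence "(int k - n)\<^sup>2 \<ge> 1"
    by (metis abs_ge_zero one_le_power power2_abs)
  thus ?thesis by (simp add: power2_eq_square algebra_simps)
qed

lemma exp2_le:
  fixes r :: int and n :: int
  shows "(2 * r + 1) * n - r\<^sup>2 - r \<le> n\<^sup>2"
proof -
  have "(r - n) * (r - n + 1) \<ge> 0"
  proof (cases "r - n \<ge> 0")
    case True thus ?thesis by simp
  next
    case False
    hence "r - n + 1 \<le> 0" by simp
    thus ?thesis using False by (simp add: mult_nonpos_nonpos)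
  qed
  thus ?thesis by (simp add: power2_eq_square algebra_simps)
qed

lemma wt_pos: "wt L i k > 0"
proof -
  have "gam L > 0" using gam_ge1[of L] by simp
  hence "gam L powi e > 0" for e by simp
  thus ?thesis unfolding wt_def
    by (intro add_pos_nonneg sum_nonneg) (auto intro: less_imp_le)
qed

lemma wt_sum_le:
  "(\<Sum>r=0..L. gam L powi ((2 * int r + 1) * (int i + 1) - (int r)\<^sup>2 - int r))
     \<le> (real L + 1) * gam L powi ((int i + 1)\<^sup>2)"
proof -
  have "(\<Sum>r=0..L. gam L powi ((2 * int r + 1) * (int i + 1) - (int r)\<^sup>2 - int r))
     \<le> (\<Sum>r=0..L. gam L powi ((int i + 1)\<^sup>2))"
    by (intro sum_mono power_int_increasing exp2_le gam_ge1)
  also have "\<dots> = (real L + 1) * gam L powi ((int i + 1)\<^sup>2)" by simp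
  finally show ?thesis .
qed

lemma wt_other:
  assumes "k \<noteq> i + 1"
  shows "wt L i k \<le> (real L + 2) * gam L powi ((int i + 1)\<^sup>2)"
proof -
  have "int k \<noteq> int i + 1" using assms by simp
  hence "gam L powi (2 * (int i + 1) * int k - (int k)\<^sup>2 + 1) \<le> gam L powi ((int i + 1)\<^sup>2)"
    by (intro power_int_increasing exp1_le gam_ge1)
  thus ?thesis using wt_sum_le[of L i] unfolding wt_def by (simp add: algebra_simps)
qed

lemma wt_main:
  "wt L i (i + 1) \<ge> gam L * gam L powi ((int i + 1)\<^sup>2)"
proof -
  have g: "gam L > 0" using gam_ge1[of L] by simp
  have e: "2 * (int i + 1) * int (i + 1) - (int (i + 1))\<^sup>2 + 1 = (int i + 1)\<^sup>2 + 1"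
    by (simp add: power2_eq_square algebra_simps)
  have "gam L powi ((int i + 1)\<^sup>2 + 1) = gam L * gam L powi ((int i + 1)\<^sup>2)"
    using g by (simp add: power_int_add)
  moreover have "(\<Sum>r=0..L. gam L powi ((2 * int r + 1) * (int i + 1) - (int r)\<^sup>2 - int r)) \<ge> 0"
    using g by (intro sum_nonneg) (simp add: less_imp_le)
  ultimately show ?thesis unfolding wt_def e by linarith
qed

lemma pi_main:
  assumes "i \<le> L" "L \<ge> 1"
  shows "pi_lvl L i (i + 1) \<ge> real L / (real L + 1)"
proof -
  define G where "G = gam L powi ((int i + 1)\<^sup>2)"
  have Gpos: "G > 0" unfolding G_def using gam_ge1[of L] by simp
  have mem: "i + 1 \<in> {1..L+1}" using assms by simp
  have S: "(\<Sum>h=1..L+1. wt L i h) = wt L i (i+1) + (\<Sum>h\<in>{1..L+1} - {i+1}. wt L i h)"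
    by (rule sum.remove[OF _ mem]) simp
  have "(\<Sum>h\<in>{1..L+1} - {i+1}. wt L i h) \<le> (\<Sum>h\<in>{1..L+1} - {i+1}. (real L + 2) * G)"
    unfolding G_def by (intro sum_mono wt_other) auto
  also have "\<dots> = real L * ((real L + 2) * G)"
    using mem by simp
  finally have O: "(\<Sum>h\<in>{1..L+1} - {i+1}. wt L i h) \<le> real L * ((real L + 2) * G)" .
  have W: "wt L i (i+1) \<ge> (real L + 1)^3 * G"
    using wt_main[of L i] unfolding G_def gam_def by simp
  have c3: "(real L + 1)^3 = real L * real L * (real L + 2) + (real L * real L + 3 * real L + 1)"
    by (simp add: power3_eq_cube algebra_simps)
  have "real L * real L * (real L + 2) \<le> (real L + 1)^3" unfolding c3 by simp
  hence "real L * real L * (real L + 2) * G \<le> (real L + 1)^3 * G"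
    using Gpos by (intro mult_right_mono) auto
  hence "real L * (real L * ((real L + 2) * G)) \<le> (real L + 1)^3 * G"
    by (simp add: mult.assoc)
  hence key: "real L * (\<Sum>h=1..L+1. wt L i h) \<le> (real L + 1) * wt L i (i+1)"
  proof -
    have "real L * (\<Sum>h\<in>{1..L+1} - {i+1}. wt L i h) \<le> real L * (real L * ((real L + 2) * G))"
      by (rule mult_left_mono[OF O]) simp
    moreover have "real L * (\<Sum>h=1..L+1. wt L i h) = real L * wt L i (i+1) + real L * (\<Sum>h\<in>{1..L+1} - {i+1}. wt L i h)"
      unfolding S by (simp add: distrib_left)
    ultimately show ?thesis using W \<open>real L * (real L * ((real L + 2) * G)) \<le> (real L + 1)^3 * G\<close>
      by (simp add: distrib_right)
  qed
  have pos: "(\<Sum>h=1..L+1. wt L i h) > 0"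
    by (intro sum_pos wt_pos) auto
  show ?thesis unfolding pi_lvl_def using key pos
    by (simp add: divide_simps mult.commute)
qed

lemma pi_nonneg: "pi_lvl L i k \<ge> 0"
  unfolding pi_lvl_def
  by (intro divide_nonneg_nonneg sum_nonneg) (auto intro: less_imp_le wt_pos)

lemma pi_sum: "(\<Sum>k\<in>{1..L+1}. pi_lvl L i k) = 1"
proof -
  have pos: "(\<Sum>h=1..L+1. wt L i h) > 0"
    by (intro sum_pos wt_pos) auto
  show ?thesis unfolding pi_lvl_def using pos
    by (simp add: sum_divide_distrib[symmetric])
qed

lemma pibar_nonneg: "pibar L xi \<ge> 0"
  unfolding pibar_def by (intro prod_nonneg pi_nonneg)

lemma lam_nth: "i \<le> L \<Longrightarrow> lam L ! i = i + 1"
  unfolding lam_def by (simp add: nth_append less_Suc_eq_le del: upt_Suc)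

lemma pibar_lam_bound:
  assumes "L \<ge> 1"
  shows "pibar L (lam L) \<ge> (real L / (real L + 1)) ^ (L + 1)"
proof -
  have "(\<Prod>i=0..L. real L / (real L + 1)) \<le> (\<Prod>i=0..L. pi_lvl L i (lam L ! i))"
  proof (intro prod_mono conjI)
    fix i assume "i \<in> {0..L}"
    hence i: "i \<le> L" by simp
    show "real L / (real L + 1) \<le> pi_lvl L i (lam L ! i)"
      using pi_main[OF i assms] lam_nth[OF i] by simp
  qed simp
  thus ?thesis unfolding pibar_def by simp
qed

lemma inv1: "(x::real) * y = 1 \<Longrightarrow> y > 0 \<Longrightarrow> x = 1 / y"
  by (simp add: field_simps)

lemma inv2: "(y::real) > 0 \<Longrightarrow> y < e \<Longrightarrow> 1 / e < 1 / y"
  by (simp add: frac_less2)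

lemma numeric:
  assumes "L \<ge> 1"
  shows "(real L / (real L + 1)) ^ (L + 1) > 1 / (2 * exp 1)"
proof -
  have Lp: "real L > 0" using assms by simp
  have "1 + 1 / real L < exp (1 / real L)"
    using exp_minus_greater[of "- (1 / real L)"] Lp by simp
  hence "(1 + 1 / real L) ^ L < exp (1 / real L) ^ L"
    using assms Lp by (intro power_strict_mono) (auto intro: add_nonneg_nonneg)
  also have "\<dots> = exp 1"
    using Lp by (simp add: exp_of_nat_mult[symmetric])
  finally have A: "(1 + 1 / real L) ^ L < exp 1" .
  have B: "(real L / (real L + 1)) ^ L * (1 + 1 / real L) ^ L = 1"
  proof -
    have e1: "1 + 1 / real L = (real L + 1) / real L" using Lp by (simp add: field_simps)
    have "real L / (real L + 1) * (1 + 1 / real L) = 1" unfolding e1 using Lp by simp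
    thus ?thesis by (metis power_mult_distrib power_one)
  qed
  have Bp: "(1 + 1 / real L) ^ L > 0" using Lp by (intro zero_less_power add_pos_nonneg) auto
  have C: "(real L / (real L + 1)) ^ L > 1 / exp 1"
  proof -
    have "(real L / (real L + 1)) ^ L = 1 / (1 + 1 / real L) ^ L"
      using inv1[OF B Bp] .
    also have "\<dots> > 1 / exp 1" using inv2[OF Bp A] .
    finally show ?thesis .
  qed
  have D: "real L / (real L + 1) \<ge> 1 / 2" using assms by (simp add: field_simps)
  have "1 / (2 * exp 1) = (1/2) * (1 / exp (1::real))" by simp
  also have "\<dots> < (real L / (real L + 1)) * (real L / (real L + 1)) ^ L"
    using C D by (intro mult_le_less_imp_less) auto
  also have "\<dots> = (real L / (real L + 1)) ^ (L + 1)" by simp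
  finally show ?thesis .
qed

lemma sum_lists_prod:
  fixes f :: "nat \<Rightarrow> 'a \<Rightarrow> real"
  assumes "finite A"
  shows "(\<Sum>xs\<in>{xs. set xs \<subseteq> A \<and> length xs = n}. \<Prod>i<n. f i (xs ! i)) = (\<Prod>i<n. \<Sum>a\<in>A. f i a)"
proof (induction n arbitrary: f)
  case 0
  have "{xs. set xs \<subseteq> A \<and> length xs = 0} = {[]}" by auto
  thus ?case by simp
next
  case (Suc n)
  have eq: "{xs. set xs \<subseteq> A \<and> length xs = Suc n}
      = (\<lambda>(x, ys). x # ys) ` (A \<times> {xs. set xs \<subseteq> A \<and> length xs = n})"
    by (auto simp: length_Suc_conv image_def)
  have inj: "inj_on (\<lambda>(x, ys). x # ys) (A \<times> {xs. set xs \<subseteq> A \<and> length xs = n})"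
    by (auto simp: inj_on_def)
  have "(\<Sum>xs\<in>{xs. set xs \<subseteq> A \<and> length xs = Suc n}. \<Prod>i<Suc n. f i (xs ! i))
      = (\<Sum>p\<in>A \<times> {xs. set xs \<subseteq> A \<and> length xs = n}. \<Prod>i<Suc n. f i ((fst p # snd p) ! i))"
    unfolding eq by (subst sum.reindex[OF inj]) (simp add: case_prod_beta)
  also have "\<dots> = (\<Sum>p\<in>A \<times> {xs. set xs \<subseteq> A \<and> length xs = n}. f 0 (fst p) * (\<Prod>i<n. f (Suc i) (snd p ! i)))"
    by (simp only: prod.lessThan_Suc_shift nth_Cons_0 nth_Cons_Suc)
  also have "\<dots> = (\<Sum>x\<in>A. \<Sum>ys\<in>{xs. set xs \<subseteq> A \<and> length xs = n}. f 0 x * (\<Prod>i<n. f (Suc i) (ys ! i)))"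
    by (simp add: sum.cartesian_product case_prod_beta)
  also have "\<dots> = (\<Sum>x\<in>A. f 0 x) * (\<Sum>ys\<in>{xs. set xs \<subseteq> A \<and> length xs = n}. \<Prod>i<n. f (Suc i) (ys ! i))"
    by (simp add: sum_product)
  also have "\<dots> = (\<Sum>x\<in>A. f 0 x) * (\<Prod>i<n. \<Sum>a\<in>A. f (Suc i) a)"
    using Suc.IH[of "\<lambda>i. f (Suc i)"] by simp
  also have "\<dots> = (\<Prod>i<Suc n. \<Sum>a\<in>A. f i a)"
    by (simp only: prod.lessThan_Suc_shift)
  finally show ?case .
qed

definition VV :: "nat \<Rightarrow> nat list set" where
  "VV L = {xs. set xs \<subseteq> {1..L+1} \<and> length xs = L + 1}"

lemma VV_finite: "finite (VV L)"
  unfolding VV_def by (intro finite_lists_length_eq) simp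

lemma sum_VV: "(\<Sum>xi\<in>VV L. pibar L xi) = 1"
proof -
  have "{0..L} = {..<L+1}" by auto
  hence "(\<Sum>xi\<in>VV L. pibar L xi) = (\<Sum>xi\<in>VV L. \<Prod>i<L+1. pi_lvl L i (xi ! i))"
    unfolding pibar_def by simp
  also have "\<dots> = (\<Prod>i<L+1. \<Sum>k\<in>{1..L+1}. pi_lvl L i k)"
    unfolding VV_def by (rule sum_lists_prod) simp
  also have "\<dots> = 1" by (rule prod.neutral) (use pi_sum in blast)
  finally show ?thesis .
qed

lemma lam_VV: "lam L \<in> VV L"
  unfolding VV_def lam_def by auto

lemma step_VV:
  assumes "xi \<in> VV L" "adj_step L xi eta"
  shows "eta \<in> VV L"
proof -
  from assms(2) obtain j where j: "j \<in> {1..L}" "eta = swap_adj xi j"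
    unfolding adj_step_def by blast
  have len: "length xi = L + 1" using assms(1) unfolding VV_def by simp
  have "set xi \<subseteq> {1..L+1}" using assms(1) unfolding VV_def by simp
  moreover have "xi ! j \<in> set xi" "xi ! (j - 1) \<in> set xi" using j len by auto
  ultimately show ?thesis unfolding j(2) swap_adj_def VV_def using len
    by (auto dest!: set_update_subset_insert[THEN subsetD])
qed

lemma Xlam_VV: "Xlam L \<subseteq> VV L"
proof
  fix xi assume "xi \<in> Xlam L"
  hence "(adj_step L)\<^sup>*\<^sup>* (lam L) xi" unfolding Xlam_def by simp
  thus "xi \<in> VV L"
    by (induction rule: rtranclp_induct) (auto intro: lam_VV step_VV)
qed

lemma Sset_VV: "Sset L \<subseteq> VV L"
proof
  fix xi assume "xi \<in> Sset L"
  then obtain taus where t: "taus \<noteq> []" "hd taus = lam L" "last taus = xi"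
      "\<forall>s. Suc s < length taus \<longrightarrow> adj_step L (taus ! s) (taus ! Suc s)"
    unfolding Sset_def by blast
  have all: "s < length taus \<Longrightarrow> taus ! s \<in> VV L" for s
  proof (induction s)
    case 0 thus ?case using t(1,2) lam_VV by (simp add: hd_conv_nth)
  next
    case (Suc s) thus ?case using t(4) step_VV by auto
  qed
  have "taus ! (length taus - 1) \<in> VV L" using t(1) by (intro all) simp
  thus "xi \<in> VV L" using t(1,3) by (simp add: last_conv_nth)
qed

lemma lam_Sset:
  assumes "L \<ge> 2"
  shows "lam L \<in> Sset L"
proof -
  have "log 2 (real L) \<ge> 1" using assms by simp
  hence "\<lfloor>log 2 (real L)\<rfloor> \<ge> 1" by linarith
  moreover have "ndiff L (lam L) (lam L) = 0" unfolding ndiff_def by simp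
  ultimately show ?thesis unfolding Sset_def
    by (intro CollectI exI[where x="[lam L]"]) simp
qed

theorem lemma13:
  fixes L :: nat
  assumes "L \<ge> 2"
  shows "pibar_lam L (Sset L) > 1 / (2 * exp 1)"
proof -
  have L1: "L \<ge> 1" using assms by simp
  have p: "pibar L (lam L) > 1 / (2 * exp 1)"
    using pibar_lam_bound[OF L1] numeric[OF L1] by linarith
  have ppos: "pibar L (lam L) > 0" using p by (smt (verit) divide_pos_pos exp_gt_zero)
  have fX: "finite (Xlam L)" using Xlam_VV VV_finite finite_subset by blast
  have fS: "finite (Sset L)" using Sset_VV VV_finite finite_subset by blast
  have lX: "lam L \<in> Xlam L" unfolding Xlam_def by simp
  have D1: "(\<Sum>xi\<in>Xlam L. pibar L xi) \<le> 1"
  proof -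
    have "sum (pibar L) (Xlam L) \<le> sum (pibar L) (VV L)"
      by (rule sum_mono2[OF VV_finite Xlam_VV]) (rule pibar_nonneg)
    thus ?thesis using sum_VV[of L] by simp
  qed
  have D0: "(\<Sum>xi\<in>Xlam L. pibar L xi) \<ge> pibar L (lam L)"
    using member_le_sum[OF lX, where f="pibar L"] fX pibar_nonneg by auto
  have N: "(\<Sum>xi\<in>Sset L. pibar L xi) \<ge> pibar L (lam L)"
    using member_le_sum[OF lam_Sset[OF assms], where f="pibar L"] fS pibar_nonneg by auto
  have "pibar L (lam L) \<le> (\<Sum>xi\<in>Sset L. pibar L xi) / (\<Sum>xi\<in>Xlam L. pibar L xi)"
  proof -
    define D where "D = (\<Sum>xi\<in>Xlam L. pibar L xi)"
    define M where "M = (\<Sum>xi\<in>Sset L. pibar L xi)"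
    have Dp: "D > 0" using D0 ppos unfolding D_def by linarith
    have Mp: "M \<ge> 0" using N ppos unfolding M_def by linarith
    have "M * D \<le> M * 1" using D1 Mp unfolding D_def by (intro mult_left_mono) auto
    hence "M \<le> M / D" using Dp by (simp add: le_divide_eq)
    thus ?thesis using N unfolding M_def D_def by linarith
  qed
  thus ?thesis unfolding pibar_lam_def using p by linarith
qed

end
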